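(* $\displaystyle\int_0^1 R(x)\,dx=\frac{3}{7}.$
   Context: Define $\rho$ on binary words: for $b=b_1b_2\dots$, $\rho(b)$ is obtained by deleting every digit $b_n=0$ and replacing every $b_n=1$ by $0$ if $n$ is odd and by $1$ if $n$ is even. For $x\in(0,1]$ let $\beta(x)$ be the unique binary expansion of $x$ with infinitely many $1$'s. Define $R:[0,1]\to[0,1]$ by $R(0)=2/3$ and, for $x\in(0,1]$, $R(x)=\sum_{n\ge1}c_n2^{-n}$ where $c=\rho(\beta(x))$. *)

theory Defs
  imports "HOL-Analysis.Analysis" "HOL-Library.Infinite_Set"
begin

text \<open>Binary words are infinite sequences of digits, indexed from 0:
  the digit b k corresponds to the paper's b_(k+1) (weight 2^-(k+1)).
  Thus the paper's position n = k+1 is even iff k is odd.\<close>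

definition digit :: "bool \<Rightarrow> real" where
  "digit d = (if d then 1 else 0)"

definition beta :: "real \<Rightarrow> (nat \<Rightarrow> bool)" where
  "beta x = (THE b. infinite {k. b k} \<and> (\<lambda>k. digit (b k) / 2 ^ Suc k) sums x)"

text \<open>rho on a word with infinitely many ones: delete the zeros; the m-th one
  (0-based m), sitting at position k (0-based), becomes 1 iff the paper's
  position k+1 is even, i.e. iff k is odd.\<close>
definition rho :: "(nat \<Rightarrow> bool) \<Rightarrow> (nat \<Rightarrow> bool)" where
  "rho b = (\<lambda>m. odd (enumerate {k. b k} m))"

definition R :: "real \<Rightarrow> real" where
  "R x = (if x = 0 then 2/3
          else (\<Sum>m. digit (rho (beta x) m) / 2 ^ Suc m))"

end

theory Submission imports Defs begin

definition Tm :: "real \<Rightarrow> real" where "Tm x = (if x > 1/2 then 2*x - 1 else 2*x)"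
definition bb :: "real \<Rightarrow> nat \<Rightarrow> bool" where "bb x k = ((Tm ^^ k) x > 1/2)"

lemma bb_0: "bb x 0 = (x > 1/2)" by (simp add: bb_def)
lemma bb_Suc: "bb x (Suc k) = bb (Tm x) k" by (simp add: bb_def funpow_Suc_right del: funpow.simps)

lemma Tm_range: "0 < x \<Longrightarrow> x \<le> 1 \<Longrightarrow> 0 < Tm x \<and> Tm x \<le> 1"
  by (auto simp: Tm_def)

lemma Tmn_range: "0 < x \<Longrightarrow> x \<le> 1 \<Longrightarrow> 0 < (Tm^^n) x \<and> (Tm^^n) x \<le> 1"
  by (induction n) (auto dest: Tm_range)

lemma partial: "(\<Sum>k<n. digit (bb x k) / 2 ^ Suc k) = x - (Tm^^n) x / 2^n"
proof (induction n arbitrary: x)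
  case 0 then show ?case by simp
next
  case (Suc n)
  have "(\<Sum>k<Suc n. digit (bb x k) / 2 ^ Suc k) = digit (bb x 0)/2 + (\<Sum>k<n. digit (bb x (Suc k)) / 2 ^ Suc (Suc k))"
    by (simp only: sum.lessThan_Suc_shift) simp
  also have "(\<Sum>k<n. digit (bb x (Suc k)) / 2 ^ Suc (Suc k)) = (\<Sum>k<n. digit (bb (Tm x) k) / 2 ^ Suc k) / 2"
    by (simp add: bb_Suc sum_divide_distrib)
  also have "\<dots> = (Tm x - (Tm^^n) (Tm x) / 2^n) / 2" using Suc by simp
  finally have eq: "(\<Sum>k<Suc n. digit (bb x k) / 2 ^ Suc k) = digit (bb x 0)/2 + (Tm x - (Tm^^n) (Tm x) / 2^n) / 2" .
  have t: "Tm x = 2*x - digit (bb x 0)" by (simp add: Tm_def digit_def bb_0)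
  have f: "(Tm^^Suc n) x = (Tm^^n) (Tm x)" by (simp add: funpow_Suc_right del: funpow.simps)
  have "digit (bb x 0)/2 + (Tm x - y / 2^n) / 2 = x - y/2^Suc n" for y
    using t by (simp add: field_simps) (metis distrib_right mult.assoc mult.commute)
  then show ?case unfolding eq f by simp
qed

lemma bb_sums: assumes "0 < x" "x \<le> 1" shows "(\<lambda>k. digit (bb x k) / 2 ^ Suc k) sums x"
proof -
  have "(\<lambda>n. (Tm^^n) x / 2^n) \<longlonglongrightarrow> 0"
  proof (rule Lim_null_comparison[of _ "\<lambda>n. (1/2)^n"])
    show "\<forall>\<^sub>F n in sequentially. norm ((Tm ^^ n) x / 2 ^ n) \<le> (1 / 2) ^ n"
    proof (intro always_eventually allI)
      fix n show "norm ((Tm ^^ n) x / 2 ^ n) \<le> (1 / 2) ^ n"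
        using Tmn_range[OF assms, of n] by (simp add: power_divide abs_of_pos divide_le_cancel)
    qed
    show "(\<lambda>n. (1/2::real)^n) \<longlonglongrightarrow> 0" by (rule LIMSEQ_power_zero) simp
  qed
  then have "(\<lambda>n. x - (Tm^^n) x / 2^n) \<longlonglongrightarrow> x - 0" by (intro tendsto_intros)
  then show ?thesis unfolding sums_def partial by simp
qed

lemma bb_inf: assumes "0 < x" "x \<le> 1" shows "infinite {k. bb x k}"
proof
  assume "finite {k. bb x k}"
  then obtain N where N: "\<And>k. k \<ge> N \<Longrightarrow> \<not> bb x k"
    by (metis (mono_tags, lifting) finite_nat_set_iff_bounded_le mem_Collect_eq not_less_eq_eq)
  have pow: "(Tm^^(N+j)) x = 2^j * (Tm^^N) x" for j
  proof (induction j)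
    case 0 then show ?case by simp
  next
    case (Suc j)
    have "\<not> bb x (N+j)" using N by simp
    then show ?case using Suc by (simp add: bb_def Tm_def)
  qed
  obtain j where "1 / (Tm^^N) x < 2^j"
    using real_arch_pow[of 2 "1 / (Tm^^N) x"] by auto
  have "1 < 2^j * (Tm^^N) x" using \<open>1 / (Tm^^N) x < 2^j\<close> Tmn_range[OF assms, of N] by (simp add: divide_less_eq)
  then have "(Tm^^(N+j)) x > 1" using pow[of j] by simp
  then show False using Tmn_range[OF assms, of "N+j"] by simp
qed

lemma digit_bounds: "0 \<le> digit d" "digit d \<le> 1" by (auto simp: digit_def)

lemma geo_sum: "(\<lambda>k. 1 / 2 ^ Suc k :: real) sums 1"
proof -
  have "(\<lambda>k. (1/2) * (1/2::real)^k) sums ((1/2) * (1 / (1 - 1/2)))"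
    by (intro sums_mult geometric_sums) simp
  then show ?thesis by (simp add: power_divide)
qed

lemma summ_dig: "summable (\<lambda>k. digit (c k) / 2 ^ Suc k :: real)"
  by (rule summable_comparison_test[OF _ sums_summable[OF geo_sum]])
     (auto simp: digit_def intro!: exI[of _ 0])

lemma val_le1: "(\<Sum>k. digit (c k) / 2 ^ Suc k :: real) \<le> 1"
proof -
  have "(\<Sum>k. digit (c k) / 2 ^ Suc k :: real) \<le> (\<Sum>k. 1 / 2 ^ Suc k)"
    by (intro suminf_le summ_dig sums_summable[OF geo_sum]) (auto simp: digit_def divide_right_mono)
  then show ?thesis using sums_unique[OF geo_sum] by simp
qed

lemma val_ge0: "(\<Sum>k. digit (c k) / 2 ^ Suc k :: real) \<ge> 0"
  by (intro suminf_nonneg summ_dig) (auto simp: digit_def)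

lemma val_pos: assumes "c j" shows "(\<Sum>k. digit (c k) / 2 ^ Suc k :: real) > 0"
  using assms by (subst suminf_pos_iff[OF summ_dig]) (auto simp: digit_def intro!: exI[of _ j])


lemma uniq_step:
  assumes inf: "infinite {k. b k}" and s: "(\<lambda>k. digit (b k) / 2 ^ Suc k) sums x"
  shows "b 0 = (x > 1/2)" and "infinite {k. b (Suc k)}"
    and "(\<lambda>k. digit (b (Suc k)) / 2 ^ Suc k) sums (Tm x)"
proof -
  have sub: "{k. b k} \<subseteq> insert 0 (Suc ` {k. b (Suc k)})"
    by (auto simp: image_iff) (metis not0_implies_Suc)
  show inf2: "infinite {k. b (Suc k)}"
    using finite_subset[OF sub] inf by auto
  have "(\<lambda>k. digit (b (Suc k)) / 2 ^ Suc (Suc k)) sums (x - digit (b 0) / 2 ^ Suc 0)"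
    using sums_Suc_iff[of "\<lambda>k. digit (b k) / 2 ^ Suc k"] s by simp
  then have "(\<lambda>k. 2 * (digit (b (Suc k)) / 2 ^ Suc (Suc k))) sums (2 * (x - digit (b 0) / 2))"
    by (intro sums_mult) simp
  then have t: "(\<lambda>k. digit (b (Suc k)) / 2 ^ Suc k) sums (2 * x - digit (b 0))"
    by (simp add: algebra_simps)
  obtain j where j: "b (Suc j)" using inf2 by (metis (mono_tags) Collect_empty_eq finite.emptyI)
  have pos: "2 * x - digit (b 0) > 0" using val_pos[of "\<lambda>k. b (Suc k)" j] j sums_unique[OF t] by simp
  have le: "2 * x - digit (b 0) \<le> 1" using val_le1[of "\<lambda>k. b (Suc k)"] sums_unique[OF t] by simp
  show b0: "b 0 = (x > 1/2)" using pos le by (cases "b 0") (auto simp: digit_def)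
  have "Tm x = 2 * x - digit (b 0)" using b0 by (simp add: Tm_def digit_def)
  then show "(\<lambda>k. digit (b (Suc k)) / 2 ^ Suc k) sums (Tm x)" using t by simp
qed

lemma uniq:
  assumes "infinite {k. b k}" "(\<lambda>k. digit (b k) / 2 ^ Suc k) sums x"
  shows "b k = bb x k"
  using assms
proof (induction k arbitrary: b x)
  case 0 then show ?case using uniq_step(1)[OF 0(1,2)] by (simp add: bb_0)
next
  case (Suc k)
  have "b (Suc k) = bb (Tm x) k"
    using Suc.IH[of "\<lambda>k. b (Suc k)" "Tm x"] uniq_step(2,3)[OF Suc.prems] by simp
  then show ?case by (simp add: bb_Suc)
qed

lemma beta_bb: assumes "0 < x" "x \<le> 1" shows "beta x = bb x"
  unfolding beta_def
proof (rule the_equality)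
  show "infinite {k. bb x k} \<and> (\<lambda>k. digit (bb x k) / 2 ^ Suc k) sums x"
    using bb_inf[OF assms] bb_sums[OF assms] by simp
  show "\<And>b. infinite {k. b k} \<and> (\<lambda>k. digit (b k) / 2 ^ Suc k) sums x \<Longrightarrow> b = bb x"
    using uniq by blast
qed

lemma enum_Suc_image0: "S \<noteq> {} \<Longrightarrow> enumerate (Suc ` S) 0 = Suc (enumerate S 0)"
  unfolding enumerate_0
proof (rule Least_equality)
  assume ne: "S \<noteq> {}"
  show "Suc (LEAST n. n \<in> S) \<in> Suc ` S" using ne by (auto intro: LeastI)
  show "\<And>y. y \<in> Suc ` S \<Longrightarrow> Suc (LEAST n. n \<in> S) \<le> y" by (auto intro: Least_le)
qed

lemma enum_Suc_image: "infinite S \<Longrightarrow> enumerate (Suc ` S) m = Suc (enumerate S m)"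
proof (induction m arbitrary: S)
  case 0
  then show ?case using enum_Suc_image0[of S] by auto
next
  case (Suc m)
  have e0: "enumerate (Suc ` S) 0 = Suc (enumerate S 0)" 
    using enum_Suc_image0[of S] Suc.prems by auto
  have "Suc ` S - {Suc (enumerate S 0)} = Suc ` (S - {enumerate S 0})" by auto
  then have "enumerate (Suc ` S) (Suc m) = enumerate (Suc ` (S - {enumerate S 0})) m"
    by (simp add: enumerate_Suc' e0)
  also have "\<dots> = Suc (enumerate (S - {enumerate S 0}) m)"
    using Suc.IH Suc.prems by (simp add: infinite_remove)
  finally show ?case by (simp add: enumerate_Suc')
qed

lemma enum_ins0_0: "enumerate (insert 0 S) 0 = (0::nat)"
  by (simp add: enumerate_0)

lemma enum_ins0_Suc: "infinite S \<Longrightarrow> enumerate (insert 0 (Suc ` S)) (Suc m) = Suc (enumerate S m)"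
proof -
  assume "infinite S"
  have "insert 0 (Suc ` S) - {0} = Suc ` S" by auto
  then show ?thesis using enum_Suc_image[OF \<open>infinite S\<close>] by (simp add: enumerate_Suc' enum_ins0_0)
qed

lemma set_bb: "{k. bb x k} = (if x > 1/2 then insert 0 (Suc ` {k. bb (Tm x) k}) else Suc ` {k. bb (Tm x) k})"
proof -
  have "k \<in> {k. bb x k} \<longleftrightarrow> k \<in> (if x > 1/2 then insert 0 (Suc ` {k. bb (Tm x) k}) else Suc ` {k. bb (Tm x) k})" for k
    by (cases k) (auto simp: bb_Suc bb_0)
  then show ?thesis by blast
qed


definition val :: "(nat \<Rightarrow> bool) \<Rightarrow> real" where "val c = (\<Sum>k. digit (c k) / 2 ^ Suc k)"
definition G :: "bool \<Rightarrow> real \<Rightarrow> real" where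
  "G q x = val (\<lambda>m. odd (enumerate {k. beta x k} m) \<noteq> q)"

lemma val_split: "val c = digit (c 0) / 2 + val (\<lambda>k. c (Suc k)) / 2"
proof -
  have "(\<Sum>k. digit (c (Suc k)) / 2 ^ Suc (Suc k)) = val c - digit (c 0) / 2"
    unfolding val_def using suminf_split_head[OF summ_dig[of c]] by simp
  moreover have "(\<Sum>k. digit (c (Suc k)) / 2 ^ Suc (Suc k)) = val (\<lambda>k. c (Suc k)) / 2"
    unfolding val_def using suminf_divide[OF summ_dig[of "\<lambda>k. c (Suc k)"], of 2] by (simp add: mult.commute)
  ultimately show ?thesis by simp
qed

lemma val_cong: "(\<And>k. c k = d k) \<Longrightarrow> val c = val d" by (simp add: val_def)

lemma G_bounds: "0 \<le> G q x" "G q x \<le> 1"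
  unfolding G_def val_def by (rule val_ge0, rule val_le1)

lemma G_left: assumes "0 < x" "x \<le> 1/2" shows "G q x = G (\<not> q) (2*x)"
proof -
  have tx: "Tm x = 2*x" using assms by (simp add: Tm_def)
  have b1: "beta x = bb x" using assms by (intro beta_bb) auto
  have b2: "beta (2*x) = bb (2*x)" using assms by (intro beta_bb) auto
  have inf: "infinite {k. bb (2*x) k}" using assms by (intro bb_inf) auto
  have "{k. bb x k} = Suc ` {k. bb (2*x) k}" using assms by (subst set_bb) (simp add: tx)
  then show ?thesis unfolding G_def b1 b2
    by (intro val_cong) (simp add: enum_Suc_image[OF inf])
qed

lemma G_right: assumes "1/2 < x" "x \<le> 1" shows "G q x = digit q / 2 + G (\<not> q) (2*x - 1) / 2"
proof -
  have tx: "Tm x = 2*x - 1" using assms by (simp add: Tm_def)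
  have b1: "beta x = bb x" using assms by (intro beta_bb) auto
  have b2: "beta (2*x-1) = bb (2*x-1)" using assms by (intro beta_bb) auto
  have inf: "infinite {k. bb (2*x-1) k}" using assms by (intro bb_inf) auto
  have st: "{k. bb x k} = insert 0 (Suc ` {k. bb (2*x-1) k})" using assms by (subst set_bb) (simp add: tx)
  show ?thesis unfolding G_def b1 b2 st
    by (subst val_split) (simp add: enum_ins0_0 enum_ins0_Suc[OF inf])
qed

lemma R_G: "x \<noteq> 0 \<Longrightarrow> R x = G False x"
  by (simp add: R_def G_def val_def rho_def)


definition stp :: "real \<Rightarrow> real \<Rightarrow> (real \<Rightarrow> real) \<Rightarrow> real \<Rightarrow> real" where
  "stp b d f x = (if x \<le> 1/2 then f (2*x) else b * f (2*x - 1) + d)"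

lemma aff: fixes f :: "real \<Rightarrow> real" assumes "(f has_integral I) {0..1::real}"
  shows "((\<lambda>x. f (2*x + c)) has_integral (I/2)) {(0 - c)/2..(1 - c)/2}"
  using has_integral_affinity'[of f I 0 1 2 c] assms by simp

lemma stp_int: fixes f :: "real \<Rightarrow> real" assumes "(f has_integral I) {0..1::real}"
  shows "(stp b d f has_integral (I/2 + (b*I + d)/2)) {0..1}"
proof -
  have l: "((\<lambda>x. f (2*x + 0)) has_integral (I/2)) {0..1/2}" using aff[OF assms, of 0] by simp
  have l2: "(stp b d f has_integral (I/2)) {0..1/2}"
    by (rule has_integral_spike_finite[of "{}", OF _ _ l]) (auto simp: stp_def)
  have r: "((\<lambda>x. f (2*x + -1)) has_integral (I/2)) {1/2..1}" using aff[OF assms, of "-1"] by simp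
  have r1: "((\<lambda>x. b * f (2*x + -1) + d) has_integral (b * (I/2) + d/2)) {1/2..1}"
    using has_integral_add[OF has_integral_mult_right[OF r, of b] has_integral_const_real[of d "1/2" 1]] by simp
  have r2: "(stp b d f has_integral (b * (I/2) + d/2)) {1/2..1}"
    by (rule has_integral_spike_finite[of "{1/2}", OF _ _ r1]) (auto simp: stp_def)
  have "(stp b d f has_integral (I/2 + (b * (I/2) + d/2))) {0..1}"
    by (rule has_integral_combine[OF _ _ l2 r2]) auto
  then show ?thesis by (simp add: field_simps)
qed


fun H :: "nat \<Rightarrow> bool \<Rightarrow> real \<Rightarrow> real" where
  "H 0 q = (\<lambda>x. 0)"
| "H (Suc n) q = stp (1/2) (digit q / 2) (H n (\<not> q))"

fun E :: "nat \<Rightarrow> real \<Rightarrow> real" where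
  "E 0 = (\<lambda>x. 1)"
| "E (Suc n) = stp (1/2) 0 (E n)"

fun J :: "nat \<Rightarrow> bool \<Rightarrow> real" where
  "J 0 q = 0"
| "J (Suc n) q = J n (\<not> q) / 2 + ((1/2) * J n (\<not> q) + digit q / 2) / 2"

lemma H_int: "(H n q has_integral J n q) {0..1}"
proof (induction n arbitrary: q)
  case 0 then show ?case using has_integral_0 by simp
next
  case (Suc n) then show ?case using stp_int[OF Suc.IH[of "\<not> q"], of "1/2" "digit q / 2"] by simp
qed

lemma E_int: "(E n has_integral (3/4)^n) {0..1}"
proof (induction n)
  case 0 then show ?case using has_integral_const_real[of 1 0 1] by simp
next
  case (Suc n)
  have h: "(E (Suc n) has_integral ((3/4)^n/2 + ((1/2) * (3/4)^n + 0)/2)) {0..1}"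
    using stp_int[OF Suc.IH, of "1/2" 0] by simp
  have eq: "(3/4::real)^n/2 + ((1/2) * (3/4)^n + 0)/2 = (3/4)^Suc n" by simp
  show ?case using h by (simp only: eq)
qed

lemma H_0: "H n q 0 = 0" by (induction n arbitrary: q) (auto simp: stp_def)
lemma E_0: "E n 0 = 1" by (induction n) (auto simp: stp_def)

lemma bounds: "0 \<le> x \<Longrightarrow> x \<le> 1 \<Longrightarrow> H n q x \<le> G q x \<and> G q x \<le> H n q x + E n x"
proof (induction n arbitrary: q x)
  case 0 then show ?case using G_bounds[of q x] by simp
next
  case (Suc n)
  show ?case
  proof (cases "x = 0")
    case True then show ?thesis using G_bounds[of q x] by (simp add: H_0 E_0 del: H.simps E.simps)
  next
    case False
    show ?thesis
    proof (cases "x \<le> 1/2")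
      case True
      then show ?thesis using Suc.IH[of "2*x" "\<not> q"] Suc.prems False G_left[of x q]
        by (simp add: stp_def)
    next
      case nle: False
      then show ?thesis using Suc.IH[of "2*x-1" "\<not> q"] Suc.prems G_right[of x q]
        by (simp add: stp_def)
    qed
  qed
qed

definition L :: "bool \<Rightarrow> real" where "L q = (if q then 4/7 else 3/7)"

lemma J_lim: "\<bar>J n q - L q\<bar> \<le> (3/4)^n"
proof (induction n arbitrary: q)
  case 0 then show ?case by (simp add: L_def)
next
  case (Suc n)
  have eq: "J (Suc n) q - L q = (3/4) * (J n (\<not> q) - L (\<not> q))"
    by (cases q) (simp_all add: L_def digit_def algebra_simps)
  have "\<bar>J (Suc n) q - L q\<bar> = (3/4) * \<bar>J n (\<not> q) - L (\<not> q)\<bar>"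
    unfolding eq by (rule abs_mult_pos'[symmetric]) simp
  also have "\<dots> \<le> (3/4) * (3/4)^n" using Suc.IH[of "\<not> q"] by (rule mult_left_mono) simp
  finally show ?case by simp
qed

lemma G_int: "(G q has_integral L q) {0..1}"
proof -
  have int: "G q integrable_on {0..1}"
  proof (rule integrable_straddle)
    fix e :: real assume "e > 0"
    obtain n where n: "(3/4::real)^n < e" using real_arch_pow_inv[OF \<open>e > 0\<close>, of "3/4"] by auto
    have hE: "((\<lambda>x. H n q x + E n x) has_integral (J n q + (3/4)^n)) {0..1}"
      by (intro has_integral_add H_int E_int)
    show "\<exists>g h i j. (g has_integral i) {0..1} \<and> (h has_integral j) {0..1} \<and>
                     \<bar>i - j\<bar> < e \<and> (\<forall>x\<in>{0..1}. g x \<le> G q x \<and> G q x \<le> h x)"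
    proof (intro exI conjI)
      show "(H n q has_integral J n q) {0..1}" by (rule H_int)
      show "((\<lambda>x. H n q x + E n x) has_integral (J n q + (3/4)^n)) {0..1}" by (rule hE)
      show "\<bar>J n q - (J n q + (3/4)^n)\<bar> < e" using n by simp
      show "\<forall>x\<in>{0..1}. H n q x \<le> G q x \<and> G q x \<le> H n q x + E n x"
        using bounds by simp
    qed
  qed
  define I where "I = integral {0..1} (G q)"
  have GI: "(G q has_integral I) {0..1}" using int unfolding I_def by (rule integrable_integral)
  have bnd: "\<bar>I - L q\<bar> \<le> 2 * (3/4::real)^n" for n
  proof -
    have "J n q \<le> I"
      by (rule has_integral_le[OF H_int GI]) (simp add: bounds)
    moreover have "I \<le> J n q + (3/4)^n"
      by (rule has_integral_le[OF GI has_integral_add[OF H_int E_int]]) (simp add: bounds)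
    ultimately show ?thesis using J_lim[of n q] by linarith
  qed
  have "I = L q"
  proof (rule ccontr)
    assume "I \<noteq> L q"
    then have pos: "\<bar>I - L q\<bar> / 2 > 0" by simp
    obtain m where mm: "(3/4::real)^m < \<bar>I - L q\<bar> / 2" using real_arch_pow_inv[OF pos, of "3/4"] by auto
    note bb = bnd[of m]
    have gen: "\<And>a b::real. b \<le> 2*a \<Longrightarrow> a < b/2 \<Longrightarrow> False" by linarith
    show False by (rule gen[OF bb mm])
  qed
  then show ?thesis using GI by simp
qed

theorem proposition4p4:
  shows "(R has_integral (3/7)) {0..1}"
proof -
  have g: "(G False has_integral 3/7) {0..1}" using G_int[of False] by (simp add: L_def)
  show ?thesis by (rule has_integral_spike_finite[of "{0}", OF _ _ g]) (auto simp: R_G)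
qed

end
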